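(* Let $M\ge3$, $\phi\in\mathrm{Hyp}^M$, $z_1\in\Sigma$, $A_1:=A(z_1)$, $\mu\ge1$, and let $K$ be sufficiently large (larger than some absolute constant). Let $h$ be the function from the preceding lemma, so that $\mathbf t(h(v,y),y)=v$ with $\mathbf t(z):=t^2_{z_1}(z_1,z)$. Define $$R_I:=\{z\in\Sigma:|t^2_{z_1}(z_1,z)|\le100\mu^{1/2}K^{-1}\},\qquad R_{II}:=\{z\in\Sigma:|A(z)-A_1|\le\mu^{1/2}K^{-3/4}\}.$$ Then $R_I$ is the union of the traces in $\Sigma$ of the curves $y\mapsto(h(v,y),y)$, $y\in[-1,1]$, with $|v|\le100\mu^{1/2}K^{-1}$; and if $z=(h(v,y),y)\in R_I\cap R_{II}$, then the tangent vector $X_z:=(h_y(v,y),1)$ satisfies $$|X_z-(-A_1,1)|\le3\mu^{1/2}K^{-3/4}.$$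
   Context: $\Sigma:=[-1,1]^2$, $2\Sigma:=[-2,2]^2$. $\mathrm{Hyp}^M$ ($M\ge3$) is the set of $\phi\in C^M(\Sigma)$ extending to a $C^M$ function on $2\Sigma$ with $\phi(0)=0$, $\nabla\phi(0)=0$, $D^2\phi(0)=\begin{pmatrix}0&1\\1&0\end{pmatrix}$, and $\sup_{2\Sigma}|\partial_x^a\partial_y^b\phi|\le10^{-5}$ for $3\le a+b\le M$. $H:=\phi_{xy}^2-\phi_{xx}\phi_{yy}$, $A:=\frac{\phi_{yy}}{\phi_{xy}+\sqrt H}$, and $t^2_{z_1}(z_1,z):=\phi_y(z)-\phi_y(z_1)-A(z_1)(\phi_x(z)-\phi_x(z_1))$. The preceding lemma provides $h:[\alpha,\beta]\times[-1,1]\to\mathbb R$ ($\alpha,\beta$ the min and max of $\mathbf t$ on $\Sigma$) with $\mathbf t(h(v,y),y)=v$, such that $(v,y)\mapsto(h(v,y),y)$ is a diffeomorphism onto a set containing $\Sigma$. *)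

theory Defs
  imports "HOL-Analysis.Analysis"
begin

definition Sq :: "(real \<times> real) set" where
  "Sq = {-1..1} \<times> {-1..1}"

definition Sq2 :: "(real \<times> real) set" where
  "Sq2 = {-2..2} \<times> {-2..2}"

fun Ck_on :: "nat \<Rightarrow> (real \<times> real) set \<Rightarrow> (real \<times> real \<Rightarrow> real) \<Rightarrow> bool" where
  "Ck_on 0 S f = continuous_on S f"
| "Ck_on (Suc k) S f =
     (\<exists>fx fy. (\<forall>p\<in>S. (f has_derivative (\<lambda>(a, b). fx p * a + fy p * b)) (at p within S))
              \<and> Ck_on k S fx \<and> Ck_on k S fy)"

definition Dx :: "(real \<times> real) set \<Rightarrow> (real \<times> real \<Rightarrow> real) \<Rightarrow> real \<times> real \<Rightarrow> real" where
  "Dx S f p = (SOME d. \<exists>e. (f has_derivative (\<lambda>(a, b). d * a + e * b)) (at p within S))"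

definition Dy :: "(real \<times> real) set \<Rightarrow> (real \<times> real \<Rightarrow> real) \<Rightarrow> real \<times> real \<Rightarrow> real" where
  "Dy S f p = (SOME e. \<exists>d. (f has_derivative (\<lambda>(a, b). d * a + e * b)) (at p within S))"

definition px :: "(real \<times> real \<Rightarrow> real) \<Rightarrow> real \<times> real \<Rightarrow> real" where
  "px \<phi> = Dx Sq2 \<phi>"
definition py :: "(real \<times> real \<Rightarrow> real) \<Rightarrow> real \<times> real \<Rightarrow> real" where
  "py \<phi> = Dy Sq2 \<phi>"
definition pxx :: "(real \<times> real \<Rightarrow> real) \<Rightarrow> real \<times> real \<Rightarrow> real" where
  "pxx \<phi> = Dx Sq2 (Dx Sq2 \<phi>)"
definition pxy :: "(real \<times> real \<Rightarrow> real) \<Rightarrow> real \<times> real \<Rightarrow> real" where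
  "pxy \<phi> = Dy Sq2 (Dx Sq2 \<phi>)"
definition pyx :: "(real \<times> real \<Rightarrow> real) \<Rightarrow> real \<times> real \<Rightarrow> real" where
  "pyx \<phi> = Dx Sq2 (Dy Sq2 \<phi>)"
definition pyy :: "(real \<times> real \<Rightarrow> real) \<Rightarrow> real \<times> real \<Rightarrow> real" where
  "pyy \<phi> = Dy Sq2 (Dy Sq2 \<phi>)"

definition Hyp :: "nat \<Rightarrow> (real \<times> real \<Rightarrow> real) \<Rightarrow> bool" where
  "Hyp M \<phi> \<longleftrightarrow>
     Ck_on M Sq2 \<phi> \<and>
     \<phi> (0, 0) = 0 \<and> px \<phi> (0, 0) = 0 \<and> py \<phi> (0, 0) = 0 \<and>
     pxx \<phi> (0, 0) = 0 \<and> pxy \<phi> (0, 0) = 1 \<and> pyx \<phi> (0, 0) = 1 \<and> pyy \<phi> (0, 0) = 0 \<and>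
     (\<forall>a b. 3 \<le> a + b \<and> a + b \<le> M \<longrightarrow>
        (\<forall>p\<in>Sq2. \<bar>((Dx Sq2 ^^ a) ((Dy Sq2 ^^ b) \<phi>)) p\<bar> \<le> 10 powr (-5)))"

definition Hdisc :: "(real \<times> real \<Rightarrow> real) \<Rightarrow> real \<times> real \<Rightarrow> real" where
  "Hdisc \<phi> p = (pxy \<phi> p)\<^sup>2 - pxx \<phi> p * pyy \<phi> p"

definition Afun :: "(real \<times> real \<Rightarrow> real) \<Rightarrow> real \<times> real \<Rightarrow> real" where
  "Afun \<phi> p = pyy \<phi> p / (pxy \<phi> p + sqrt (Hdisc \<phi> p))"

definition tt :: "(real \<times> real \<Rightarrow> real) \<Rightarrow> real \<times> real \<Rightarrow> real \<times> real \<Rightarrow> real" where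
  "tt \<phi> z1 z = py \<phi> z - py \<phi> z1 - Afun \<phi> z1 * (px \<phi> z - px \<phi> z1)"

definition talpha :: "(real \<times> real \<Rightarrow> real) \<Rightarrow> real \<times> real \<Rightarrow> real" where
  "talpha \<phi> z1 = (INF z\<in>Sq. tt \<phi> z1 z)"
definition tbeta :: "(real \<times> real \<Rightarrow> real) \<Rightarrow> real \<times> real \<Rightarrow> real" where
  "tbeta \<phi> z1 = (SUP z\<in>Sq. tt \<phi> z1 z)"

end

theory Submission
  imports Defs
begin

lemma partial_x:
  assumes "(f has_derivative (\<lambda>(a, b). A * a + B * b)) (at (x, y) within S)"
    and "(\<lambda>s. (s, y)) ` T \<subseteq> S"
  shows "((\<lambda>s. f (s, y)) has_real_derivative A) (at x within T)"
proof -
  have 1: "((\<lambda>s. (s, y)) has_derivative (\<lambda>d. (d, 0))) (at x within T)"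
    by (auto intro!: derivative_eq_intros)
  have "((\<lambda>s. f (s, y)) has_derivative (\<lambda>d. (\<lambda>(a, b). A * a + B * b) (d, 0))) (at x within T)"
    by (rule has_derivative_in_compose[OF 1]) (use assms has_derivative_subset in blast)
  moreover have "(\<lambda>d. (\<lambda>(a, b). A * a + B * b) (d, 0)) = (*) A" by (auto simp: fun_eq_iff)
  ultimately show ?thesis unfolding has_field_derivative_def by simp
qed

lemma partial_y:
  assumes "(f has_derivative (\<lambda>(a, b). A * a + B * b)) (at (x, y) within S)"
    and "(\<lambda>s. (x, s)) ` T \<subseteq> S"
  shows "((\<lambda>s. f (x, s)) has_real_derivative B) (at y within T)"
proof -
  have 1: "((\<lambda>s. (x, s)) has_derivative (\<lambda>d. (0, d))) (at y within T)"
    by (auto intro!: derivative_eq_intros)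
  have "((\<lambda>s. f (x, s)) has_derivative (\<lambda>d. (\<lambda>(a, b). A * a + B * b) (0, d))) (at y within T)"
    by (rule has_derivative_in_compose[OF 1]) (use assms has_derivative_subset in blast)
  moreover have "(\<lambda>d. (\<lambda>(a, b). A * a + B * b) (0, d)) = (*) B" by (auto simp: fun_eq_iff)
  ultimately show ?thesis unfolding has_field_derivative_def by simp
qed

lemma lin_eq:
  assumes "(\<lambda>(a, b). A * a + B * b) = (\<lambda>(a::real, b::real). C * a + D * b)"
  shows "A = C \<and> B = D"
proof -
  have "A = C" using fun_cong[OF assms, of "(1,0)"] by simp
  moreover have "B = D" using fun_cong[OF assms, of "(0,1)"] by simp
  ultimately show ?thesis by simp
qed

lemma Dxy_eq:
  assumes "(f has_derivative (\<lambda>(a, b). A * a + B * b)) (at p within S)"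
    and "p \<in> interior S"
  shows "Dx S f p = A \<and> Dy S f p = B"
proof -
  have at: "\<And>F. (f has_derivative F) (at p within S) = (f has_derivative F) (at p)"
    using at_within_interior[OF assms(2)] by simp
  have u: "\<And>C D. (f has_derivative (\<lambda>(a, b). C * a + D * b)) (at p within S) \<Longrightarrow> C = A \<and> D = B"
    using assms(1) unfolding at by (metis has_derivative_unique lin_eq)
  have "Dx S f p = A" unfolding Dx_def
    by (rule some_equality) (use assms(1) u in blast)+
  moreover have "Dy S f p = B" unfolding Dy_def
    by (rule some_equality) (use assms(1) u in blast)+
  ultimately show ?thesis by simp
qed

lemma D_local:
  assumes "open U" "U \<subseteq> S" "p \<in> U" "\<And>q. q \<in> U \<Longrightarrow> g q = g' q"
  shows "Dx S g p = Dx S g' p" "Dy S g p = Dy S g' p"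
proof -
  have pi: "p \<in> interior S" using assms interior_maximal by blast
  have e: "\<And>F. (g has_derivative F) (at p within S) = (g' has_derivative F) (at p within S)"
    using has_derivative_transform_within_open[OF _ assms(1) assms(3)] assms(4) by metis
  show "Dx S g p = Dx S g' p" "Dy S g p = Dy S g' p" unfolding Dx_def Dy_def e by simp_all
qed

lemma mvt_abs:
  fixes f f' :: "real \<Rightarrow> real"
  assumes "\<And>t. min a b \<le> t \<Longrightarrow> t \<le> max a b \<Longrightarrow> DERIV f t :> f' t \<and> \<bar>f' t\<bar> \<le> B"
  shows "\<bar>f b - f a\<bar> \<le> B * \<bar>b - a\<bar>"
proof -
  consider "a < b" | "a = b" | "b < a" by linarith
  then show ?thesis
  proof cases
    case 1
    then obtain z where z: "a < z" "z < b" "f b - f a = (b - a) * f' z"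
      using MVT2[of a b f f'] assms by (auto simp: min_def max_def)
    have "\<bar>f' z\<bar> \<le> B" using assms[of z] z by (auto simp: min_def max_def)
    then show ?thesis using z 1 by (simp add: abs_mult mult.commute mult_right_mono)
  next
    case 2 then show ?thesis by simp
  next
    case 3
    then obtain z where z: "b < z" "z < a" "f a - f b = (a - b) * f' z"
      using MVT2[of b a f f'] assms by (auto simp: min_def max_def)
    have "\<bar>f' z\<bar> \<le> B" using assms[of z] z by (auto simp: min_def max_def)
    then show ?thesis using z 3 by (simp add: abs_mult mult.commute mult_right_mono abs_minus_commute)
  qed
qed

lemma dist_small:
  fixes x y s t r :: real
  assumes "\<bar>s\<bar> \<le> r/3" "\<bar>t\<bar> \<le> r/3" "r > 0"
  shows "dist (x + s, y + t) (x, y) < r"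
proof -
  have "dist (x + s, y + t) (x, y) = sqrt (s\<^sup>2 + t\<^sup>2)"
    by (simp add: dist_Pair_Pair dist_real_def)
  also have "\<dots> \<le> \<bar>s\<bar> + \<bar>t\<bar>" by (rule sqrt_sum_squares_le_sum_abs)
  finally show ?thesis using assms by linarith
qed

lemma schwarz:
  fixes f fx fy fxx fxy fyx fyy :: "real \<times> real \<Rightarrow> real"
  assumes U: "open U" "p \<in> U"
    and df: "\<forall>q\<in>U. (f has_derivative (\<lambda>(a, b). fx q * a + fy q * b)) (at q)"
    and dfx: "\<forall>q\<in>U. (fx has_derivative (\<lambda>(a, b). fxx q * a + fxy q * b)) (at q)"
    and dfy: "\<forall>q\<in>U. (fy has_derivative (\<lambda>(a, b). fyx q * a + fyy q * b)) (at q)"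
    and c1: "continuous_on U fxy" and c2: "continuous_on U fyx"
  shows "fxy p = fyx p"
proof (rule ccontr)
  assume ne: "fxy p \<noteq> fyx p"
  obtain x y where p: "p = (x, y)" by fastforce
  define e where "e = \<bar>fxy p - fyx p\<bar> / 2"
  have e: "e > 0" using ne by (simp add: e_def)
  obtain r0 where r0: "r0 > 0" "ball p r0 \<subseteq> U" using U openE by blast
  obtain d1 where d1: "d1 > 0" "\<forall>q\<in>U. dist q p < d1 \<longrightarrow> dist (fxy q) (fxy p) < e"
    using c1 e U(2) unfolding continuous_on_iff by blast
  obtain d2 where d2: "d2 > 0" "\<forall>q\<in>U. dist q p < d2 \<longrightarrow> dist (fyx q) (fyx p) < e"
    using c2 e U(2) unfolding continuous_on_iff by blast
  define r where "r = min r0 (min d1 d2)"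
  have r: "r > 0" using r0 d1 d2 by (simp add: r_def)
  define h where "h = r / 3"
  have h: "h > 0" using r by (simp add: h_def)
  have inQ: "(x + s, y + t) \<in> U \<and> dist (fxy (x + s, y + t)) (fxy p) < e \<and> dist (fyx (x + s, y + t)) (fyx p) < e"
    if "0 \<le> s" "s \<le> h" "0 \<le> t" "t \<le> h" for s t
  proof -
    have "dist (x + s, y + t) (x, y) < r" using that r by (intro dist_small) (auto simp: h_def)
    then have "dist (x + s, y + t) p < r0" "dist (x + s, y + t) p < d1" "dist (x + s, y + t) p < d2"
      by (auto simp: p r_def)
    then have "(x + s, y + t) \<in> U" using r0 by (auto simp: dist_commute)
    then show ?thesis using d1 d2 \<open>dist (x + s, y + t) p < d1\<close> \<open>dist (x + s, y + t) p < d2\<close> by blast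
  qed
  have inU: "(a, b) \<in> U" if "x \<le> a" "a \<le> x + h" "y \<le> b" "b \<le> y + h" for a b
    using inQ[of "a - x" "b - y"] that by auto
  define \<Delta> where "\<Delta> = f (x + h, y + h) - f (x + h, y) - f (x, y + h) + f (x, y)"
  have "\<exists>\<xi>. x < \<xi> \<and> \<xi> < x + h \<and> (\<lambda>s. f (s, y + h) - f (s, y)) (x + h) - (\<lambda>s. f (s, y + h) - f (s, y)) x
        = (x + h - x) * (fx (\<xi>, y + h) - fx (\<xi>, y))"
  proof (rule MVT2)
    fix s assume s: "x \<le> s" "s \<le> x + h"
    have "((\<lambda>s. f (s, y + h)) has_real_derivative fx (s, y + h)) (at s)"
      using df inU[of s "y + h"] s h by (intro partial_x[where S=UNIV]) auto
    moreover have "((\<lambda>s. f (s, y)) has_real_derivative fx (s, y)) (at s)"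
      using df inU[of s y] s h by (intro partial_x[where S=UNIV]) auto
    ultimately show "((\<lambda>s. f (s, y + h) - f (s, y)) has_real_derivative fx (s, y + h) - fx (s, y)) (at s)"
      by (rule DERIV_diff)
  qed (use h in simp)
  then obtain \<xi> where xi: "x < \<xi>" "\<xi> < x + h" "\<Delta> = h * (fx (\<xi>, y + h) - fx (\<xi>, y))"
    by (auto simp: \<Delta>_def algebra_simps)
  have "\<exists>\<eta>. y < \<eta> \<and> \<eta> < y + h \<and> (\<lambda>t. fx (\<xi>, t)) (y + h) - (\<lambda>t. fx (\<xi>, t)) y = (y + h - y) * fxy (\<xi>, \<eta>)"
  proof (rule MVT2)
    fix t assume t: "y \<le> t" "t \<le> y + h"
    show "((\<lambda>t. fx (\<xi>, t)) has_real_derivative fxy (\<xi>, t)) (at t)"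
      using dfx inU[of \<xi> t] t xi by (intro partial_y[where S=UNIV]) auto
  qed (use h in simp)
  then obtain \<eta> where eta: "y < \<eta>" "\<eta> < y + h" "\<Delta> = h * h * fxy (\<xi>, \<eta>)"
    using xi by auto
  have "\<exists>\<eta>. y < \<eta> \<and> \<eta> < y + h \<and> (\<lambda>t. f (x + h, t) - f (x, t)) (y + h) - (\<lambda>t. f (x + h, t) - f (x, t)) y
        = (y + h - y) * (fy (x + h, \<eta>) - fy (x, \<eta>))"
  proof (rule MVT2)
    fix t assume t: "y \<le> t" "t \<le> y + h"
    have "((\<lambda>t. f (x + h, t)) has_real_derivative fy (x + h, t)) (at t)"
      using df inU[of "x + h" t] t h by (intro partial_y[where S=UNIV]) auto
    moreover have "((\<lambda>t. f (x, t)) has_real_derivative fy (x, t)) (at t)"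
      using df inU[of x t] t h by (intro partial_y[where S=UNIV]) auto
    ultimately show "((\<lambda>t. f (x + h, t) - f (x, t)) has_real_derivative fy (x + h, t) - fy (x, t)) (at t)"
      by (rule DERIV_diff)
  qed (use h in simp)
  then obtain \<eta>' where eta': "y < \<eta>'" "\<eta>' < y + h" "\<Delta> = h * (fy (x + h, \<eta>') - fy (x, \<eta>'))"
    by (auto simp: \<Delta>_def algebra_simps)
  have "\<exists>\<xi>. x < \<xi> \<and> \<xi> < x + h \<and> (\<lambda>s. fy (s, \<eta>')) (x + h) - (\<lambda>s. fy (s, \<eta>')) x = (x + h - x) * fyx (\<xi>, \<eta>')"
  proof (rule MVT2)
    fix s assume s: "x \<le> s" "s \<le> x + h"
    show "((\<lambda>s. fy (s, \<eta>')) has_real_derivative fyx (s, \<eta>')) (at s)"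
      using dfy inU[of s \<eta>'] s eta' by (intro partial_x[where S=UNIV]) auto
  qed (use h in simp)
  then obtain \<xi>' where xi': "x < \<xi>'" "\<xi>' < x + h" "\<Delta> = h * h * fyx (\<xi>', \<eta>')"
    using eta' by auto
  have eq: "fxy (\<xi>, \<eta>) = fyx (\<xi>', \<eta>')" using eta(3) xi'(3) h by simp
  have a1: "dist (fxy (x + (\<xi> - x), y + (\<eta> - y))) (fxy p) < e"
    using inQ[of "\<xi> - x" "\<eta> - y"] xi eta by auto
  have a2: "dist (fyx (x + (\<xi>' - x), y + (\<eta>' - y))) (fyx p) < e"
    using inQ[of "\<xi>' - x" "\<eta>' - y"] xi' eta' by auto
  have b1: "\<bar>fxy (\<xi>, \<eta>) - fxy p\<bar> < e" using a1 by (simp add: dist_real_def)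
  have b2: "\<bar>fyx (\<xi>', \<eta>') - fyx p\<bar> < e" using a2 by (simp add: dist_real_def)
  show False using b1 b2 eq unfolding e_def by (auto simp: abs_if split: if_splits)
qed

lemma A_small:
  fixes a c d :: real
  assumes "\<bar>a\<bar> \<le> 1/1000" "\<bar>d\<bar> \<le> 1/1000" "\<bar>c - 1\<bar> \<le> 1/1000"
  defines "A \<equiv> d / (c + sqrt (c\<^sup>2 - a * d))"
  shows "\<bar>A\<bar> \<le> 2/1000" "a * A\<^sup>2 - 2 * c * A + d = 0"
proof -
  define s where "s = sqrt (c\<^sup>2 - a * d)"
  have ad: "\<bar>a * d\<bar> \<le> 1/1000 * (1/1000)" unfolding abs_mult
    using assms(1,2) by (intro mult_mono) auto
  have c: "c \<ge> 999/1000" using assms(3) by linarith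
  have c2: "c\<^sup>2 \<ge> (999/1000)\<^sup>2" using c by (intro power_mono) auto
  have "(999/1000::real)\<^sup>2 = 998001/1000000" by (simp add: power2_eq_square)
  moreover have "a * d \<le> \<bar>a * d\<bar>" by (rule abs_ge_self)
  ultimately have H: "c\<^sup>2 - a * d \<ge> 0" using ad c2 by linarith
  have s0: "s \<ge> 0" and ss: "s\<^sup>2 = c\<^sup>2 - a * d" using H by (auto simp: s_def)
  have pos: "c + s \<ge> 999/1000" using s0 c by linarith
  have Ad: "A * (c + s) = d" using pos by (simp add: A_def s_def[symmetric])
  have "\<bar>A\<bar> * (999/1000) \<le> \<bar>A\<bar> * (c + s)" using pos by (intro mult_left_mono) auto
  also have "\<dots> = \<bar>d\<bar>" using Ad pos by (metis abs_mult abs_of_nonneg order_trans zero_le_divide_iff zero_le_numeral zero_le_one pos) 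
  finally show "\<bar>A\<bar> \<le> 2/1000" using assms(2) by linarith
  have aA: "a * A = c - s"
  proof -
    have "a * A * (c + s) = a * d" using Ad by (simp add: mult.assoc)
    also have "\<dots> = (c - s) * (c + s)" using ss by (simp add: algebra_simps power2_eq_square)
    finally show ?thesis using pos by simp
  qed
  have "a * A\<^sup>2 - 2 * c * A + d = A * (a * A) - 2 * c * A + A * (c + s)"
    using Ad by (simp add: power2_eq_square algebra_simps)
  also have "\<dots> = 0" unfolding aA by (simp add: algebra_simps)
  finally show "a * A\<^sup>2 - 2 * c * A + d = 0" .
qed

lemma alg:
  fixes a c d a1 c1 d1 hy :: real
  assumes b: "\<bar>a\<bar> \<le> 1/1000" "\<bar>d\<bar> \<le> 1/1000" "\<bar>c - 1\<bar> \<le> 1/1000"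
    "\<bar>a1\<bar> \<le> 1/1000" "\<bar>d1\<bar> \<le> 1/1000" "\<bar>c1 - 1\<bar> \<le> 1/1000"
    and eq: "(c - d1 / (c1 + sqrt (c1\<^sup>2 - a1 * d1)) * a) * hy + (d - d1 / (c1 + sqrt (c1\<^sup>2 - a1 * d1)) * c) = 0"
  shows "\<bar>hy + d1 / (c1 + sqrt (c1\<^sup>2 - a1 * d1))\<bar> \<le> 3 * \<bar>d / (c + sqrt (c\<^sup>2 - a * d)) - d1 / (c1 + sqrt (c1\<^sup>2 - a1 * d1))\<bar>"
proof -
  define A where "A = d / (c + sqrt (c\<^sup>2 - a * d))"
  define A1 where "A1 = d1 / (c1 + sqrt (c1\<^sup>2 - a1 * d1))"
  have A: "\<bar>A\<bar> \<le> 2/1000" "a * A\<^sup>2 - 2 * c * A + d = 0" using A_small[OF b(1-3)] by (simp_all add: A_def)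
  have A1: "\<bar>A1\<bar> \<le> 2/1000" using A_small[OF b(4-6)] by (simp_all add: A1_def)
  have aA1: "\<bar>A1 * a\<bar> \<le> 2/1000 * (1/1000)" unfolding abs_mult
    using A1 b(1) by (intro mult_mono) auto
  define D where "D = c - A1 * a"
  have "A1 * a \<le> \<bar>A1 * a\<bar>" by (rule abs_ge_self)
  moreover have "c \<ge> 1 - 1/1000" using b(3) by linarith
  ultimately have D: "D \<ge> 99/100" using aA1 by (simp add: D_def)
  have eq': "D * hy + (d - A1 * c) = 0" using eq by (simp add: D_def A1_def)
  have hy: "hy + A1 = - (a * A1\<^sup>2 - 2 * c * A1 + d) / D"
    using eq' D by (simp add: field_simps power2_eq_square) (simp add: algebra_simps D_def)
  have Q: "a * A1\<^sup>2 - 2 * c * A1 + d = (A1 - A) * (a * (A1 + A) - 2 * c)"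
    using A(2) by (simp add: algebra_simps power2_eq_square) (simp add: algebra_simps power2_eq_square)?
  have B: "\<bar>a * (A1 + A) - 2 * c\<bar> \<le> 297/100"
  proof -
    have "\<bar>a * (A1 + A)\<bar> \<le> 1/1000 * (4/1000)" unfolding abs_mult
      using A(1) A1 b(1) abs_triangle_ineq[of A1 A] by (intro mult_mono) auto
    then show ?thesis using b(3) by (auto simp: abs_if split: if_splits)
  qed
  have "\<bar>hy + A1\<bar> = \<bar>A1 - A\<bar> * \<bar>a * (A1 + A) - 2 * c\<bar> / D"
    using D by (simp add: hy Q abs_mult)
  also have "\<dots> \<le> \<bar>A1 - A\<bar> * (297/100) / (99/100)"
    using D B by (intro frac_le mult_left_mono) auto
  also have "\<dots> = 3 * \<bar>A - A1\<bar>" by (simp add: abs_minus_commute)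
  finally show ?thesis by (simp add: A_def A1_def)
qed

lemma Ck_on_Suc_down: "Ck_on (Suc k) S f \<Longrightarrow> Ck_on k S f"
proof (induction k arbitrary: f)
  case 0
  then obtain fx fy where d: "\<forall>p\<in>S. (f has_derivative (\<lambda>(a, b). fx p * a + fy p * b)) (at p within S)"
    by auto
  then show ?case
    by (auto simp: continuous_on_eq_continuous_within intro: has_derivative_continuous)
next
  case (Suc k)
  then show ?case by (metis Ck_on.simps(2))
qed

lemma Ck_on_le: "k \<le> m \<Longrightarrow> Ck_on m S f \<Longrightarrow> Ck_on k S f"
proof (induction m)
  case 0 then show ?case by simp
next
  case (Suc m) then show ?case using Ck_on_Suc_down le_Suc_eq by blast
qed

lemma Ck_on_1_cont: "Ck_on 1 S f \<Longrightarrow> continuous_on S f"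
  using Ck_on_Suc_down[of 0 S f] by simp

lemma Dloc2:
  assumes "open U" "U \<subseteq> S" "p \<in> U" "\<And>q. q \<in> U \<Longrightarrow> g q = g' q"
    "(g' has_derivative (\<lambda>(a, b). gx * a + gy * b)) (at p within S)"
  shows "Dx S g p = gx \<and> Dy S g p = gy"
proof -
  have pi: "p \<in> interior S" using assms interior_maximal by blast
  show ?thesis using D_local[OF assms(1-4)] Dxy_eq[OF assms(5) pi] by simp
qed

lemma deriv_agree:
  fixes g g' :: "real \<times> real \<Rightarrow> real"
  assumes "open U" "p \<in> U" "\<And>q. q \<in> U \<Longrightarrow> g q = g' q"
    "(g has_derivative (\<lambda>(a, b). A * a + B * b)) (at p)"
    "(g' has_derivative (\<lambda>(a, b). C * a + D * b)) (at p)"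
  shows "A = C \<and> B = D"
proof -
  have "(g' has_derivative (\<lambda>(a, b). A * a + B * b)) (at p)"
    by (rule has_derivative_transform_within_open[OF assms(4,1,2)]) (rule assms(3))
  then have "(\<lambda>(a, b). A * a + B * b) = (\<lambda>(a, b). C * a + D * b)"
    using assms(5) by (rule has_derivative_unique)
  then show ?thesis by (rule lin_eq)
qed

lemma grad_bound:
  fixes g gx gy :: "real \<times> real \<Rightarrow> real"
  assumes "Sq \<subseteq> U"
    and d: "\<forall>q\<in>U. (g has_derivative (\<lambda>(a, b). gx q * a + gy q * b)) (at q)"
    and bx: "\<forall>q\<in>Sq. \<bar>gx q\<bar> \<le> B" and by': "\<forall>q\<in>Sq. \<bar>gy q\<bar> \<le> B"
    and z: "z \<in> Sq"
  shows "\<bar>g z - g (0, 0)\<bar> \<le> 2 * B"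
proof -
  obtain x y where zxy: "z = (x, y)" by fastforce
  have xy: "\<bar>x\<bar> \<le> 1" "\<bar>y\<bar> \<le> 1" using z by (auto simp: zxy Sq_def)
  have sq: "(s, t) \<in> Sq" if "\<bar>s\<bar> \<le> 1" "\<bar>t\<bar> \<le> 1" for s t
    using that by (auto simp: Sq_def abs_le_iff)
  have 1: "\<bar>g (x, 0) - g (0, 0)\<bar> \<le> B * \<bar>x - 0\<bar>"
  proof (rule mvt_abs[where f = "\<lambda>s. g (s, 0)" and f' = "\<lambda>s. gx (s, 0)"])
    fix t assume t: "min 0 x \<le> t" "t \<le> max 0 x"
    then have "\<bar>t\<bar> \<le> 1" using xy by (auto simp: min_def max_def split: if_splits)
    then have "(t, 0) \<in> Sq" using sq by simp
    then have "(t, 0) \<in> U" using assms(1) by blast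
    then have "(g has_derivative (\<lambda>(a, b). gx (t, 0) * a + gy (t, 0) * b)) (at (t, 0))" using d by blast
    then have "((\<lambda>s. g (s, 0)) has_real_derivative gx (t, 0)) (at t)" by (rule partial_x) simp
    moreover have "\<bar>gx (t, 0)\<bar> \<le> B" using bx \<open>(t, 0) \<in> Sq\<close> by blast
    ultimately show "((\<lambda>s. g (s, 0)) has_real_derivative gx (t, 0)) (at t) \<and> \<bar>gx (t, 0)\<bar> \<le> B" by blast
  qed
  have 2: "\<bar>g (x, y) - g (x, 0)\<bar> \<le> B * \<bar>y - 0\<bar>"
  proof (rule mvt_abs[where f = "\<lambda>s. g (x, s)" and f' = "\<lambda>s. gy (x, s)"])
    fix t assume t: "min 0 y \<le> t" "t \<le> max 0 y"
    then have "\<bar>t\<bar> \<le> 1" using xy by (auto simp: min_def max_def split: if_splits)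
    then have "(x, t) \<in> Sq" using sq xy by simp
    then have "(x, t) \<in> U" using assms(1) by blast
    then have "(g has_derivative (\<lambda>(a, b). gx (x, t) * a + gy (x, t) * b)) (at (x, t))" using d by blast
    then have "((\<lambda>s. g (x, s)) has_real_derivative gy (x, t)) (at t)" by (rule partial_y) simp
    moreover have "\<bar>gy (x, t)\<bar> \<le> B" using by' \<open>(x, t) \<in> Sq\<close> by blast
    ultimately show "((\<lambda>s. g (x, s)) has_real_derivative gy (x, t)) (at t) \<and> \<bar>gy (x, t)\<bar> \<le> B" by blast
  qed
  have "\<bar>gx (0, 0)\<bar> \<le> B" using bx sq[of 0 0] by simp
  then have "B \<ge> 0" by linarith
  then have "B * \<bar>x\<bar> \<le> B" "B * \<bar>y\<bar> \<le> B" using xy by (auto intro: mult_left_le)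
  have tri: "\<bar>g z - g (0, 0)\<bar> \<le> \<bar>g (x, y) - g (x, 0)\<bar> + \<bar>g (x, 0) - g (0, 0)\<bar>"
    using abs_triangle_ineq[of "g (x, y) - g (x, 0)" "g (x, 0) - g (0, 0)"] by (simp add: zxy)
  show ?thesis using 1 2 tri \<open>B * \<bar>x\<bar> \<le> B\<close> \<open>B * \<bar>y\<bar> \<le> B\<close> by simp
qed

lemma p10: "(10::real) powr (-5) = 1 / 100000"
  by (simp add: powr_minus powr_numeral)

lemma key:
  assumes M: "3 \<le> M" and H: "Hyp M \<phi>"
  shows "\<exists>fx fy fxx fxy fyy.
     (\<forall>q\<in>interior Sq2. px \<phi> q = fx q \<and> py \<phi> q = fy q \<and> pxx \<phi> q = fxx q \<and> pxy \<phi> q = fxy q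
          \<and> pyx \<phi> q = fxy q \<and> pyy \<phi> q = fyy q)
   \<and> (\<forall>q\<in>interior Sq2. (fx has_derivative (\<lambda>(a, b). fxx q * a + fxy q * b)) (at q)
          \<and> (fy has_derivative (\<lambda>(a, b). fxy q * a + fyy q * b)) (at q))
   \<and> (\<forall>q\<in>Sq. \<bar>fxx q\<bar> \<le> 1/1000 \<and> \<bar>fxy q - 1\<bar> \<le> 1/1000 \<and> \<bar>fyy q\<bar> \<le> 1/1000)"
proof -
  define U where "U = interior Sq2"
  have oU: "open U" and US: "U \<subseteq> Sq2" by (simp_all add: U_def interior_subset)
  have SqU: "Sq \<subseteq> U" by (auto simp: U_def Sq_def Sq2_def interior_Times)
  have atU: "(f has_derivative F) (at q within Sq2) = (f has_derivative F) (at q)" if "q \<in> U" for q f F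
    using at_within_interior[of q Sq2] that by (simp add: U_def)
  have Ck: "Ck_on M Sq2 \<phi>" and v: "pxx \<phi> (0, 0) = 0" "pxy \<phi> (0, 0) = 1" "pyy \<phi> (0, 0) = 0"
    and HB: "\<forall>a b. 3 \<le> a + b \<and> a + b \<le> M \<longrightarrow>
        (\<forall>p\<in>Sq2. \<bar>((Dx Sq2 ^^ a) ((Dy Sq2 ^^ b) \<phi>)) p\<bar> \<le> 10 powr (-5))"
    using H unfolding Hyp_def by blast+
  have M3: "Suc (Suc (Suc 0)) \<le> M" using M by simp
  have "Ck_on (Suc (Suc (Suc 0))) Sq2 \<phi>" by (rule Ck_on_le[OF M3 Ck])
  then obtain fx fy where
    d0: "\<forall>p\<in>Sq2. (\<phi> has_derivative (\<lambda>(a, b). fx p * a + fy p * b)) (at p within Sq2)"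
    and cx: "Ck_on (Suc (Suc 0)) Sq2 fx" and cy: "Ck_on (Suc (Suc 0)) Sq2 fy"
    using Ck_on.simps(2)[of "Suc (Suc 0)" Sq2 \<phi>] by blast
  from cx obtain fxx fxy where
    d1: "\<forall>p\<in>Sq2. (fx has_derivative (\<lambda>(a, b). fxx p * a + fxy p * b)) (at p within Sq2)"
    and cxx: "Ck_on (Suc 0) Sq2 fxx" and cxy: "Ck_on (Suc 0) Sq2 fxy"
    using Ck_on.simps(2)[of "Suc 0" Sq2 fx] by blast
  from cy obtain fyx fyy where
    d2: "\<forall>p\<in>Sq2. (fy has_derivative (\<lambda>(a, b). fyx p * a + fyy p * b)) (at p within Sq2)"
    and cyx: "Ck_on (Suc 0) Sq2 fyx" and cyy: "Ck_on (Suc 0) Sq2 fyy"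
    using Ck_on.simps(2)[of "Suc 0" Sq2 fy] by blast
  from cxx obtain fxxx fxxy where
    d3: "\<forall>p\<in>Sq2. (fxx has_derivative (\<lambda>(a, b). fxxx p * a + fxxy p * b)) (at p within Sq2)"
    and c3: "continuous_on Sq2 fxxx" "continuous_on Sq2 fxxy"
    using Ck_on.simps(2)[of 0 Sq2 fxx] Ck_on.simps(1) by blast
  from cxy obtain fxyx fxyy where
    d4: "\<forall>p\<in>Sq2. (fxy has_derivative (\<lambda>(a, b). fxyx p * a + fxyy p * b)) (at p within Sq2)"
    and c4: "continuous_on Sq2 fxyx" "continuous_on Sq2 fxyy"
    using Ck_on.simps(2)[of 0 Sq2 fxy] Ck_on.simps(1) by blast
  from cyx obtain fyxx fyxy where
    d5: "\<forall>p\<in>Sq2. (fyx has_derivative (\<lambda>(a, b). fyxx p * a + fyxy p * b)) (at p within Sq2)"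
    and c5: "continuous_on Sq2 fyxx" "continuous_on Sq2 fyxy"
    using Ck_on.simps(2)[of 0 Sq2 fyx] Ck_on.simps(1) by blast
  from cyy obtain fyyx fyyy where
    d6: "\<forall>p\<in>Sq2. (fyy has_derivative (\<lambda>(a, b). fyyx p * a + fyyy p * b)) (at p within Sq2)"
    and c6: "continuous_on Sq2 fyyx" "continuous_on Sq2 fyyy"
    using Ck_on.simps(2)[of 0 Sq2 fyy] Ck_on.simps(1) by blast
  have cxy': "continuous_on U fxy" "continuous_on U fyx"
    using Ck_on_1_cont[of Sq2 fxy] Ck_on_1_cont[of Sq2 fyx] cxy cyx US
    by (auto intro: continuous_on_subset)
  have c': "continuous_on U fxxy" "continuous_on U fxyx" "continuous_on U fyxy" "continuous_on U fyyx"
    using c3 c4 c5 c6 US by (auto intro: continuous_on_subset)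
  have d0': "\<forall>q\<in>U. (\<phi> has_derivative (\<lambda>(a, b). fx q * a + fy q * b)) (at q)"
    using d0 US atU by blast
  have d1': "\<forall>q\<in>U. (fx has_derivative (\<lambda>(a, b). fxx q * a + fxy q * b)) (at q)"
    using d1 US atU by blast
  have d2': "\<forall>q\<in>U. (fy has_derivative (\<lambda>(a, b). fyx q * a + fyy q * b)) (at q)"
    using d2 US atU by blast
  have d3': "\<forall>q\<in>U. (fxx has_derivative (\<lambda>(a, b). fxxx q * a + fxxy q * b)) (at q)"
    using d3 US atU by blast
  have d4': "\<forall>q\<in>U. (fxy has_derivative (\<lambda>(a, b). fxyx q * a + fxyy q * b)) (at q)"
    using d4 US atU by blast
  have d5': "\<forall>q\<in>U. (fyx has_derivative (\<lambda>(a, b). fyxx q * a + fyxy q * b)) (at q)"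
    using d5 US atU by blast
  have d6': "\<forall>q\<in>U. (fyy has_derivative (\<lambda>(a, b). fyyx q * a + fyyy q * b)) (at q)"
    using d6 US atU by blast
  have E1: "Dx Sq2 \<phi> q = fx q \<and> Dy Sq2 \<phi> q = fy q" if q: "q \<in> U" for q
    using Dloc2[OF oU US q, of \<phi> \<phi>] d0 US q by blast
  have E2: "Dx Sq2 (Dx Sq2 \<phi>) q = fxx q \<and> Dy Sq2 (Dx Sq2 \<phi>) q = fxy q" if q: "q \<in> U" for q
    using Dloc2[OF oU US q, of "Dx Sq2 \<phi>" fx] d1 US q E1 by blast
  have E3: "Dx Sq2 (Dy Sq2 \<phi>) q = fyx q \<and> Dy Sq2 (Dy Sq2 \<phi>) q = fyy q" if q: "q \<in> U" for q
    using Dloc2[OF oU US q, of "Dy Sq2 \<phi>" fy] d2 US q E1 by blast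
  have E4: "Dx Sq2 (Dx Sq2 (Dx Sq2 \<phi>)) q = fxxx q" if q: "q \<in> U" for q
    using Dloc2[OF oU US q, of "Dx Sq2 (Dx Sq2 \<phi>)" fxx] d3 US q E2 by blast
  have E5: "Dx Sq2 (Dx Sq2 (Dy Sq2 \<phi>)) q = fyxx q" if q: "q \<in> U" for q
    using Dloc2[OF oU US q, of "Dx Sq2 (Dy Sq2 \<phi>)" fyx] d5 US q E3 by blast
  have E6: "Dx Sq2 (Dy Sq2 (Dy Sq2 \<phi>)) q = fyyx q \<and> Dy Sq2 (Dy Sq2 (Dy Sq2 \<phi>)) q = fyyy q" if q: "q \<in> U" for q
    using Dloc2[OF oU US q, of "Dy Sq2 (Dy Sq2 \<phi>)" fyy] d6 US q E3 by blast
  define e where "e = (10::real) powr (-5)"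
  have B30: "\<forall>p\<in>Sq2. \<bar>Dx Sq2 (Dx Sq2 (Dx Sq2 \<phi>)) p\<bar> \<le> e"
    using spec[OF spec[OF HB, of "Suc (Suc (Suc 0))"], of 0] M by (simp add: e_def)
  have B21: "\<forall>p\<in>Sq2. \<bar>Dx Sq2 (Dx Sq2 (Dy Sq2 \<phi>)) p\<bar> \<le> e"
    using spec[OF spec[OF HB, of "Suc (Suc 0)"], of "Suc 0"] M by (simp add: e_def)
  have B12: "\<forall>p\<in>Sq2. \<bar>Dx Sq2 (Dy Sq2 (Dy Sq2 \<phi>)) p\<bar> \<le> e"
    using spec[OF spec[OF HB, of "Suc 0"], of "Suc (Suc 0)"] M by (simp add: e_def)
  have B03: "\<forall>p\<in>Sq2. \<bar>Dy Sq2 (Dy Sq2 (Dy Sq2 \<phi>)) p\<bar> \<le> e"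
    using spec[OF spec[OF HB, of 0], of "Suc (Suc (Suc 0))"] M by (simp add: e_def)
  have S0: "fxy q = fyx q" if q: "q \<in> U" for q
    by (rule schwarz[OF oU q d0' d1' d2' cxy'])
  have S1: "fxxy q = fxyx q" if q: "q \<in> U" for q
    by (rule schwarz[OF oU q d1' d3' d4' c'(1,2)])
  have S2: "fyxy q = fyyx q" if q: "q \<in> U" for q
    by (rule schwarz[OF oU q d2' d5' d6' c'(3,4)])
  have AG: "fxyx q = fyxx q \<and> fxyy q = fyxy q" if q: "q \<in> U" for q
    using deriv_agree[OF oU q, of fxy fyx] S0 d4' d5' q by blast
  have bxxx: "\<bar>fxxx q\<bar> \<le> e" if q: "q \<in> U" for q
    using bspec[OF B30, of q] E4[OF q] US q by auto
  have byxx: "\<bar>fyxx q\<bar> \<le> e" if q: "q \<in> U" for q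
    using bspec[OF B21, of q] E5[OF q] US q by auto
  have byyx: "\<bar>fyyx q\<bar> \<le> e" if q: "q \<in> U" for q
    using bspec[OF B12, of q] E6[OF q] US q by auto
  have byyy: "\<bar>fyyy q\<bar> \<le> e" if q: "q \<in> U" for q
    using bspec[OF B03, of q] E6[OF q] US q by auto
  have e2: "2 * e \<le> 1/1000" by (simp add: e_def p10)
  have z0: "(0, 0) \<in> Sq" by (simp add: Sq_def)
  have v0: "fxx (0, 0) = 0" "fxy (0, 0) = 1" "fyy (0, 0) = 0"
    using v E2[of "(0,0)"] E3[of "(0,0)"] SqU z0 by (auto simp: pxx_def pxy_def pyy_def)
  have gxx: "\<bar>fxx z - fxx (0, 0)\<bar> \<le> 2 * e" if "z \<in> Sq" for z
    by (rule grad_bound[OF SqU d3' _ _ that]) (use bxxx byxx S1 AG SqU in auto)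
  have gxy: "\<bar>fxy z - fxy (0, 0)\<bar> \<le> 2 * e" if "z \<in> Sq" for z
    by (rule grad_bound[OF SqU d4' _ _ that]) (use byxx byyx S2 AG SqU in auto)
  have gyy: "\<bar>fyy z - fyy (0, 0)\<bar> \<le> 2 * e" if "z \<in> Sq" for z
    by (rule grad_bound[OF SqU d6' _ _ that]) (use byyx byyy SqU in auto)
  show ?thesis
  proof (intro exI conjI ballI)
    fix q assume q: "q \<in> interior Sq2"
    then have qU: "q \<in> U" by (simp add: U_def)
    show "px \<phi> q = fx q" "py \<phi> q = fy q" "pxx \<phi> q = fxx q" "pxy \<phi> q = fxy q"
      "pyx \<phi> q = fxy q" "pyy \<phi> q = fyy q"
      using E1[OF qU] E2[OF qU] E3[OF qU] S0[OF qU]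
      by (simp_all add: px_def py_def pxx_def pxy_def pyx_def pyy_def)
    show "(fx has_derivative (\<lambda>(a, b). fxx q * a + fxy q * b)) (at q)" using d1' qU by blast
    show "(fy has_derivative (\<lambda>(a, b). fxy q * a + fyy q * b)) (at q)" using d2' qU S0[OF qU] by simp
  next
    fix q assume q: "q \<in> Sq"
    show "\<bar>fxx q\<bar> \<le> 1/1000" "\<bar>fxy q - 1\<bar> \<le> 1/1000" "\<bar>fyy q\<bar> \<le> 1/1000"
      using gxx[OF q] gxy[OF q] gyy[OF q] v0 e2 by simp_all
  qed
qed

theorem mainTheorem11:
  "\<exists>K0::real. \<forall>(M::nat) \<phi> z1 (\<mu>::real) (K::real)
       (h::real \<Rightarrow> real \<Rightarrow> real) (hv::real \<Rightarrow> real \<Rightarrow> real) (hy::real \<Rightarrow> real \<Rightarrow> real).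
     3 \<le> M \<and> Hyp M \<phi> \<and> z1 \<in> Sq \<and> 1 \<le> \<mu> \<and> K0 \<le> K \<and>
     (\<forall>v\<in>{talpha \<phi> z1..tbeta \<phi> z1}. \<forall>y\<in>{-1..1}. tt \<phi> z1 (h v y, y) = v) \<and>
     inj_on (\<lambda>(v, y). (h v y, y)) ({talpha \<phi> z1..tbeta \<phi> z1} \<times> {-1..1}) \<and>
     Sq \<subseteq> (\<lambda>(v, y). (h v y, y)) ` ({talpha \<phi> z1..tbeta \<phi> z1} \<times> {-1..1}) \<and>
     (\<forall>v\<in>{talpha \<phi> z1..tbeta \<phi> z1}. \<forall>y\<in>{-1..1}.
        ((\<lambda>(a, b). h a b) has_derivative (\<lambda>(da, db). hv v y * da + hy v y * db))
          (at (v, y) within ({talpha \<phi> z1..tbeta \<phi> z1} \<times> {-1..1}))) \<and>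
     continuous_on ({talpha \<phi> z1..tbeta \<phi> z1} \<times> {-1..1}) (\<lambda>(v, y). hv v y) \<and>
     continuous_on ({talpha \<phi> z1..tbeta \<phi> z1} \<times> {-1..1}) (\<lambda>(v, y). hy v y) \<and>
     (\<forall>v\<in>{talpha \<phi> z1..tbeta \<phi> z1}. \<forall>y\<in>{-1..1}. hv v y \<noteq> 0)
   \<longrightarrow>
     (let A1 = Afun \<phi> z1;
          RI = {z\<in>Sq. \<bar>tt \<phi> z1 z\<bar> \<le> 100 * sqrt \<mu> / K};
          RII = {z\<in>Sq. \<bar>Afun \<phi> z - A1\<bar> \<le> sqrt \<mu> * K powr (-3/4)}
      in RI = {(h v y, y) | v y. v \<in> {talpha \<phi> z1..tbeta \<phi> z1} \<and>
                                  \<bar>v\<bar> \<le> 100 * sqrt \<mu> / K \<and> y \<in> {-1..1}} \<inter> Sq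
       \<and> (\<forall>v\<in>{talpha \<phi> z1..tbeta \<phi> z1}. \<forall>y\<in>{-1..1}.
            (h v y, y) \<in> RI \<inter> RII \<longrightarrow>
            norm ((hy v y, 1::real) - (- A1, 1)) \<le> 3 * sqrt \<mu> * K powr (-3/4)))"
proof (rule exI[of _ 0], intro allI impI)
  fix M :: nat and \<phi> :: "real \<times> real \<Rightarrow> real" and z1 :: "real \<times> real" and \<mu> K :: real
    and h hv hy :: "real \<Rightarrow> real \<Rightarrow> real"
  assume asm: "3 \<le> M \<and> Hyp M \<phi> \<and> z1 \<in> Sq \<and> 1 \<le> \<mu> \<and> 0 \<le> K \<and>
     (\<forall>v\<in>{talpha \<phi> z1..tbeta \<phi> z1}. \<forall>y\<in>{-1..1}. tt \<phi> z1 (h v y, y) = v) \<and>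
     inj_on (\<lambda>(v, y). (h v y, y)) ({talpha \<phi> z1..tbeta \<phi> z1} \<times> {-1..1}) \<and>
     Sq \<subseteq> (\<lambda>(v, y). (h v y, y)) ` ({talpha \<phi> z1..tbeta \<phi> z1} \<times> {-1..1}) \<and>
     (\<forall>v\<in>{talpha \<phi> z1..tbeta \<phi> z1}. \<forall>y\<in>{-1..1}.
        ((\<lambda>(a, b). h a b) has_derivative (\<lambda>(da, db). hv v y * da + hy v y * db))
          (at (v, y) within ({talpha \<phi> z1..tbeta \<phi> z1} \<times> {-1..1}))) \<and>
     continuous_on ({talpha \<phi> z1..tbeta \<phi> z1} \<times> {-1..1}) (\<lambda>(v, y). hv v y) \<and>
     continuous_on ({talpha \<phi> z1..tbeta \<phi> z1} \<times> {-1..1}) (\<lambda>(v, y). hy v y) \<and>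
     (\<forall>v\<in>{talpha \<phi> z1..tbeta \<phi> z1}. \<forall>y\<in>{-1..1}. hv v y \<noteq> 0)"
  define R where "R = {talpha \<phi> z1..tbeta \<phi> z1}"
  have M: "3 \<le> M" and H: "Hyp M \<phi>" and z1: "z1 \<in> Sq"
    and hinv: "\<forall>v\<in>R. \<forall>y\<in>{-1..1}. tt \<phi> z1 (h v y, y) = v"
    and cov: "Sq \<subseteq> (\<lambda>(v, y). (h v y, y)) ` (R \<times> {-1..1})"
    and hder: "\<forall>v\<in>R. \<forall>y\<in>{-1..1}.
        ((\<lambda>(a, b). h a b) has_derivative (\<lambda>(da, db). hv v y * da + hy v y * db))
          (at (v, y) within (R \<times> {-1..1}))"
    using asm unfolding R_def by blast+
  obtain fx fy fxx fxy fyy where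
    ident: "\<forall>q\<in>interior Sq2. px \<phi> q = fx q \<and> py \<phi> q = fy q \<and> pxx \<phi> q = fxx q \<and> pxy \<phi> q = fxy q
          \<and> pyx \<phi> q = fxy q \<and> pyy \<phi> q = fyy q"
    and fder: "\<forall>q\<in>interior Sq2. (fx has_derivative (\<lambda>(a, b). fxx q * a + fxy q * b)) (at q)
          \<and> (fy has_derivative (\<lambda>(a, b). fxy q * a + fyy q * b)) (at q)"
    and fb: "\<forall>q\<in>Sq. \<bar>fxx q\<bar> \<le> 1/1000 \<and> \<bar>fxy q - 1\<bar> \<le> 1/1000 \<and> \<bar>fyy q\<bar> \<le> 1/1000"
    using key[OF M H] by blast
  define U where "U = interior Sq2"
  have oU: "open U" by (simp add: U_def)
  have SqU: "Sq \<subseteq> U" by (auto simp: U_def Sq_def Sq2_def interior_Times)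
  define A1 where "A1 = Afun \<phi> z1"
  have Aform: "Afun \<phi> q = fyy q / (fxy q + sqrt ((fxy q)\<^sup>2 - fxx q * fyy q))" if "q \<in> Sq" for q
    using ident SqU that by (auto simp: Afun_def Hdisc_def U_def)
  have part1: "{z\<in>Sq. \<bar>tt \<phi> z1 z\<bar> \<le> 100 * sqrt \<mu> / K} = {(h v y, y) | v y. v \<in> {talpha \<phi> z1..tbeta \<phi> z1} \<and>
                                  \<bar>v\<bar> \<le> 100 * sqrt \<mu> / K \<and> y \<in> {-1..1}} \<inter> Sq"
  proof (rule set_eqI, rule iffI)
    fix z assume "z \<in> {z\<in>Sq. \<bar>tt \<phi> z1 z\<bar> \<le> 100 * sqrt \<mu> / K}"
    then have zS: "z \<in> Sq" and zb: "\<bar>tt \<phi> z1 z\<bar> \<le> 100 * sqrt \<mu> / K" by auto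
    from cov zS obtain v y where vy: "v \<in> R" "y \<in> {-1..1}" "z = (h v y, y)" by auto
    then have "tt \<phi> z1 z = v" using hinv by auto
    then show "z \<in> {(h v y, y) | v y. v \<in> {talpha \<phi> z1..tbeta \<phi> z1} \<and>
                                  \<bar>v\<bar> \<le> 100 * sqrt \<mu> / K \<and> y \<in> {-1..1}} \<inter> Sq"
      using vy zS zb unfolding R_def by blast
  next
    fix z assume "z \<in> {(h v y, y) | v y. v \<in> {talpha \<phi> z1..tbeta \<phi> z1} \<and>
                                  \<bar>v\<bar> \<le> 100 * sqrt \<mu> / K \<and> y \<in> {-1..1}} \<inter> Sq"
    then obtain v y where vy: "v \<in> R" "y \<in> {-1..1}" "z = (h v y, y)" "\<bar>v\<bar> \<le> 100 * sqrt \<mu> / K"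
      and zS: "z \<in> Sq" unfolding R_def by blast
    then have "tt \<phi> z1 z = v" using hinv by auto
    then show "z \<in> {z\<in>Sq. \<bar>tt \<phi> z1 z\<bar> \<le> 100 * sqrt \<mu> / K}" using zS vy by auto
  qed
  have part2: "norm ((hy v y, 1::real) - (- A1, 1)) \<le> 3 * sqrt \<mu> * K powr (-3/4)"
    if v: "v \<in> R" and y: "y \<in> {-1..1}"
      and zS: "(h v y, y) \<in> Sq" and zII: "\<bar>Afun \<phi> (h v y, y) - A1\<bar> \<le> sqrt \<mu> * K powr (-3/4)"
    for v y
  proof -
    define z where "z = (h v y, y)"
    have zSq: "z \<in> Sq" using zS by (simp add: z_def)
    have zU: "z \<in> U" using zSq SqU by blast
    have d1: "((\<lambda>t. (v, t)) has_derivative (\<lambda>d. (0, d))) (at y within {-1..1})"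
      by (auto intro!: derivative_eq_intros)
    have d2: "((\<lambda>(a, b). h a b) has_derivative (\<lambda>(da, db). hv v y * da + hy v y * db))
          (at (v, y) within ((\<lambda>t. (v, t)) ` {-1..1}))"
      by (rule has_derivative_subset[OF bspec[OF bspec[OF hder v] y]]) (use v in auto)
    have "((\<lambda>t. (\<lambda>(a, b). h a b) (v, t)) has_derivative (\<lambda>d. (\<lambda>(da, db). hv v y * da + hy v y * db) (0, d)))
          (at y within {-1..1})"
      by (rule has_derivative_in_compose[OF d1 d2])
    then have dh: "((\<lambda>t. h v t) has_derivative (\<lambda>d. hy v y * d)) (at y within {-1..1})" by simp
    have dgam: "((\<lambda>t. (h v t, t)) has_derivative (\<lambda>d. (hy v y * d, d))) (at y within {-1..1})"
      by (rule has_derivative_Pair[OF dh has_derivative_ident])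
    define Fx where "Fx = (\<lambda>(a::real, b::real). fxx z * a + fxy z * b)"
    define Fy where "Fy = (\<lambda>(a::real, b::real). fxy z * a + fyy z * b)"
    define G where "G = (\<lambda>w. fy w - py \<phi> z1 - A1 * (fx w - px \<phi> z1))"
    have fxd: "(fx has_derivative Fx) (at z)" and fyd: "(fy has_derivative Fy) (at z)"
      using fder zU by (auto simp: U_def Fx_def Fy_def)
    have dG: "(G has_derivative (\<lambda>w. Fy w - 0 - A1 * (Fx w - 0))) (at z)"
      unfolding G_def
      by (intro has_derivative_diff has_derivative_mult_right has_derivative_const fxd fyd)
    have dc: "((\<lambda>t. G (h v t, t)) has_derivative (\<lambda>d. Fy (hy v y * d, d) - 0 - A1 * (Fx (hy v y * d, d) - 0)))
        (at y within {-1..1})"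
      using has_derivative_compose[OF dgam, of G] dG by (simp add: z_def)
    have cont: "continuous (at y within {-1..1}) (\<lambda>t. (h v t, t))"
      by (rule has_derivative_continuous[OF dgam])
    obtain r where r: "r > 0" "ball z r \<subseteq> U" using oU zU openE by blast
    obtain \<delta> where \<delta>: "\<delta> > 0" "\<forall>t\<in>{-1..1}. dist t y < \<delta> \<longrightarrow> dist (h v t, t) (h v y, y) < r"
      using cont r(1) unfolding continuous_within_eps_delta by blast
    have eqv: "G (h v t, t) = v" if t: "t \<in> {-1..1}" "dist t y < \<delta>" for t
    proof -
      have "(h v t, t) \<in> U" using \<delta>(2) t r(2) by (auto simp: z_def dist_commute)
      then have "G (h v t, t) = tt \<phi> z1 (h v t, t)"
        using ident z1 SqU by (auto simp: G_def tt_def U_def A1_def)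
      also have "\<dots> = v" using hinv v t by auto
      finally show ?thesis .
    qed
    have dv: "((\<lambda>t. v) has_derivative (\<lambda>d. Fy (hy v y * d, d) - 0 - A1 * (Fx (hy v y * d, d) - 0)))
        (at y within {-1..1})"
      by (rule has_derivative_transform_within[OF dc \<delta>(1) y]) (use eqv in auto)
    have dv0: "((\<lambda>t. v) has_derivative (\<lambda>d. 0)) (at y within {-1..1})"
      by (rule has_derivative_const)
    have "(\<lambda>d. Fy (hy v y * d, d) - 0 - A1 * (Fx (hy v y * d, d) - 0)) = (\<lambda>d::real. 0::real)"
      using frechet_derivative_unique_within_closed_interval[of "-1" 1 y "\<lambda>t. v"] dv dv0 y
      by (simp add: cbox_interval)
    from fun_cong[OF this, of 1]
    have eq0: "(fxy z * hy v y + fyy z) - A1 * (fxx z * hy v y + fxy z) = 0"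
      by (simp add: Fx_def Fy_def)
    have bz: "\<bar>fxx z\<bar> \<le> 1/1000" "\<bar>fyy z\<bar> \<le> 1/1000" "\<bar>fxy z - 1\<bar> \<le> 1/1000"
      using fb zSq by auto
    have bz1: "\<bar>fxx z1\<bar> \<le> 1/1000" "\<bar>fyy z1\<bar> \<le> 1/1000" "\<bar>fxy z1 - 1\<bar> \<le> 1/1000"
      using fb z1 by auto
    have A1f: "A1 = fyy z1 / (fxy z1 + sqrt ((fxy z1)\<^sup>2 - fxx z1 * fyy z1))"
      using Aform[OF z1] by (simp add: A1_def)
    have eq1: "(fxy z - A1 * fxx z) * hy v y + (fyy z - A1 * fxy z) = 0"
      using eq0 by (simp add: algebra_simps)
    have "\<bar>hy v y + A1\<bar> \<le> 3 * \<bar>Afun \<phi> z - A1\<bar>"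
      using alg[OF bz bz1, of "hy v y"] eq1 unfolding A1f Aform[OF zSq] by simp
    also have "\<dots> \<le> 3 * (sqrt \<mu> * K powr (-3/4))" using zII by (simp add: z_def)
    finally have "\<bar>hy v y + A1\<bar> \<le> 3 * sqrt \<mu> * K powr (-3/4)" by simp
    moreover have "norm ((hy v y, 1::real) - (- A1, 1)) = \<bar>hy v y + A1\<bar>"
      by (simp add: norm_Pair)
    ultimately show ?thesis by simp
  qed
  show "let A1 = Afun \<phi> z1;
          RI = {z\<in>Sq. \<bar>tt \<phi> z1 z\<bar> \<le> 100 * sqrt \<mu> / K};
          RII = {z\<in>Sq. \<bar>Afun \<phi> z - A1\<bar> \<le> sqrt \<mu> * K powr (-3/4)}
      in RI = {(h v y, y) | v y. v \<in> {talpha \<phi> z1..tbeta \<phi> z1} \<and>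
                                  \<bar>v\<bar> \<le> 100 * sqrt \<mu> / K \<and> y \<in> {-1..1}} \<inter> Sq
       \<and> (\<forall>v\<in>{talpha \<phi> z1..tbeta \<phi> z1}. \<forall>y\<in>{-1..1}.
            (h v y, y) \<in> RI \<inter> RII \<longrightarrow>
            norm ((hy v y, 1::real) - (- A1, 1)) \<le> 3 * sqrt \<mu> * K powr (-3/4))"
    unfolding Let_def
  proof (intro conjI ballI impI)
    show "{z\<in>Sq. \<bar>tt \<phi> z1 z\<bar> \<le> 100 * sqrt \<mu> / K} = {(h v y, y) | v y. v \<in> {talpha \<phi> z1..tbeta \<phi> z1} \<and>
                                  \<bar>v\<bar> \<le> 100 * sqrt \<mu> / K \<and> y \<in> {-1..1}} \<inter> Sq" by (rule part1)
  next
    fix v y assume "v \<in> {talpha \<phi> z1..tbeta \<phi> z1}" "y \<in> {-1..1}"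
      "(h v y, y) \<in> {z\<in>Sq. \<bar>tt \<phi> z1 z\<bar> \<le> 100 * sqrt \<mu> / K} \<inter> {z\<in>Sq. \<bar>Afun \<phi> z - Afun \<phi> z1\<bar> \<le> sqrt \<mu> * K powr (-3/4)}"
    then show "norm ((hy v y, 1::real) - (- Afun \<phi> z1, 1)) \<le> 3 * sqrt \<mu> * K powr (-3/4)"
      using part2[of v y] unfolding R_def A1_def by auto
  qed
qed

end
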